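(* Let $\Omega\subset\mathbb{R}^N$ be a bounded domain with $C^{2,\alpha}$ boundary, $\alpha\in(0,1)$, let $a,c\in C^{0,\alpha}(\overline\Omega)$ with $a>0$ and $c>0$ on $\overline\Omega$, and let $\varepsilon\in(0,1)$. Then the problem $$-\Delta u+c(x)\,(u+\varepsilon)^{-1}|\nabla u|^2=a(x)\ \text{ in }\Omega,\qquad u>0\ \text{ in }\Omega,\qquad u=0\ \text{ on }\partial\Omega$$ has at most one solution $u\in C^{2,\alpha}(\overline\Omega)$. *)

theory Defs
  imports "HOL-Analysis.Analysis"
begin

definition hoelder_on :: "real \<Rightarrow> 'a::metric_space set \<Rightarrow> ('a \<Rightarrow> 'b::real_normed_vector) \<Rightarrow> bool" where
  "hoelder_on \<alpha> S f \<longleftrightarrow> (\<exists>C. \<forall>x\<in>S. \<forall>y\<in>S. norm (f x - f y) \<le> C * dist x y powr \<alpha>)"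

definition C0_alpha :: "real \<Rightarrow> 'a::metric_space set \<Rightarrow> ('a \<Rightarrow> 'b::real_normed_vector) \<Rightarrow> bool" where
  "C0_alpha \<alpha> S f \<longleftrightarrow> continuous_on S f \<and> bounded (f ` S) \<and> hoelder_on \<alpha> S f"

text \<open>C^{2,alpha} on an open set S, with explicit first and second Frechet derivatives
  Df, D2f, all of f, Df, D2f bounded and uniformly Hoelder on S (so they extend to the closure).\<close>
definition C2_alpha_with ::
  "real \<Rightarrow> 'a::real_normed_vector set \<Rightarrow> ('a \<Rightarrow> 'b::real_normed_vector)
     \<Rightarrow> ('a \<Rightarrow> ('a \<Rightarrow>\<^sub>L 'b)) \<Rightarrow> ('a \<Rightarrow> ('a \<Rightarrow>\<^sub>L ('a \<Rightarrow>\<^sub>L 'b))) \<Rightarrow> bool" where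
  "C2_alpha_with \<alpha> S f Df D2f \<longleftrightarrow>
     (\<forall>x\<in>S. (f has_derivative blinfun_apply (Df x)) (at x) \<and>
             (Df has_derivative blinfun_apply (D2f x)) (at x)) \<and>
     C0_alpha \<alpha> S f \<and> C0_alpha \<alpha> S Df \<and> C0_alpha \<alpha> S D2f"

definition C2_alpha :: "real \<Rightarrow> 'a::real_normed_vector set \<Rightarrow> ('a \<Rightarrow> 'b::real_normed_vector) \<Rightarrow> bool" where
  "C2_alpha \<alpha> S f \<longleftrightarrow> (\<exists>Df D2f. C2_alpha_with \<alpha> S f Df D2f)"

definition C2_alpha_boundary :: "real \<Rightarrow> (real^'n) set \<Rightarrow> bool" where
  "C2_alpha_boundary \<alpha> \<Omega> \<longleftrightarrow>
    (\<forall>x0\<in>frontier \<Omega>. \<exists>U (\<psi>::real^'n \<Rightarrow> real^'n) k.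
       open U \<and> bounded U \<and> x0 \<in> U \<and> inj_on \<psi> U \<and> open (\<psi> ` U) \<and>
       C2_alpha \<alpha> U \<psi> \<and> C2_alpha \<alpha> (\<psi> ` U) (the_inv_into U \<psi>) \<and>
       \<psi> ` (U \<inter> \<Omega>) = {y \<in> \<psi> ` U. y $ k > 0} \<and>
       \<psi> ` (U \<inter> frontier \<Omega>) = {y \<in> \<psi> ` U. y $ k = 0})"

definition lap :: "((real^'n) \<Rightarrow>\<^sub>L ((real^'n) \<Rightarrow>\<^sub>L real)) \<Rightarrow> real" where
  "lap H = (\<Sum>i\<in>UNIV. blinfun_apply (blinfun_apply H (axis i 1)) (axis i 1))"

definition grad_sq :: "((real^'n) \<Rightarrow>\<^sub>L real) \<Rightarrow> real" where
  "grad_sq L = (\<Sum>i\<in>UNIV. (blinfun_apply L (axis i 1))\<^sup>2)"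

definition is_solution :: "real \<Rightarrow> (real^'n) set \<Rightarrow> (real^'n \<Rightarrow> real) \<Rightarrow> (real^'n \<Rightarrow> real)
    \<Rightarrow> real \<Rightarrow> (real^'n \<Rightarrow> real) \<Rightarrow> bool" where
  "is_solution \<alpha> \<Omega> a c \<epsilon> u \<longleftrightarrow>
     continuous_on (closure \<Omega>) u \<and>
     (\<exists>Du D2u. C2_alpha_with \<alpha> \<Omega> u Du D2u \<and>
        (\<forall>x\<in>\<Omega>. - lap (D2u x) + c x * inverse (u x + \<epsilon>) * grad_sq (Du x) = a x)) \<and>
     (\<forall>x\<in>\<Omega>. u x > 0) \<and> (\<forall>x\<in>frontier \<Omega>. u x = 0)"

end

theory Submission
  imports Defs
begin

lemma second_deriv_max:
  fixes f f' :: "real \<Rightarrow> real"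
  assumes d: "0<d" and mx: "\<forall>t. \<bar>t\<bar><d \<longrightarrow> f t \<le> f 0"
    and D1: "\<forall>t. \<bar>t\<bar><d \<longrightarrow> (f has_real_derivative f' t) (at t)"
    and D2: "(f' has_real_derivative L) (at 0)"
  shows "f' 0 = 0 \<and> L \<le> 0"
proof -
  have f0: "f' 0 = 0"
    apply (rule DERIV_local_max[of f "f' 0" 0 d])
    using D1 d mx by (auto simp: dist_real_def)
  moreover have "L \<le> 0"
  proof (rule ccontr)
    assume "\<not> L \<le> 0"
    then obtain e where e: "e>0" "\<forall>h>0. h < e \<longrightarrow> f' 0 < f' (0 + h)"
      using DERIV_pos_inc_right[OF D2] by force
    define h where "h = min e d / 2"
    have h: "0 < h" "h < e" "h < d" using e d by (auto simp: h_def)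
    have "\<exists>z>0. z < h \<and> f h - f 0 = (h - 0) * f' z"
      apply (rule MVT2) using h D1 by auto
    then obtain z where z: "0<z" "z<h" "f h - f 0 = h * f' z" by auto
    have "f' z > 0" using e(2) z h f0 by auto
    hence "f h - f 0 > 0" using z h by simp
    moreover have "f h \<le> f 0" using mx h by auto
    ultimately show False by simp
  qed
  ultimately show ?thesis by simp
qed

lemma line_d1:
  assumes "(u has_derivative blinfun_apply (Du y)) (at y)" "y = x0 + t *\<^sub>R e"
  shows "((\<lambda>t. u (x0 + t *\<^sub>R e)) has_real_derivative (blinfun_apply (Du y) e)) (at t)"
proof -
  have l: "((\<lambda>t. x0 + t *\<^sub>R e) has_derivative (\<lambda>h. h *\<^sub>R e)) (at t)"
    by (auto intro!: derivative_eq_intros)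
  have "((\<lambda>t. u (x0 + t *\<^sub>R e)) has_derivative (\<lambda>h. blinfun_apply (Du y) (h *\<^sub>R e))) (at t)"
    using has_derivative_compose[OF l] assms by auto
  thus ?thesis
    unfolding has_field_derivative_def
    by (simp add: blinfun.scaleR_right mult.commute[of _ "blinfun_apply (Du y) e"])
qed

lemma line_d2:
  assumes "(Du has_derivative blinfun_apply (D2u x0)) (at x0)"
  shows "((\<lambda>t. blinfun_apply (Du (x0 + t *\<^sub>R e)) e) has_real_derivative
      (blinfun_apply (blinfun_apply (D2u x0) e) e)) (at 0)"
proof -
  have l: "((\<lambda>t. x0 + t *\<^sub>R e) has_derivative (\<lambda>h. h *\<^sub>R e)) (at 0)"
    by (auto intro!: derivative_eq_intros)
  have "((\<lambda>t. Du (x0 + t *\<^sub>R e)) has_derivative (\<lambda>h. blinfun_apply (D2u x0) (h *\<^sub>R e))) (at 0)"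
    using has_derivative_compose[OF l, of Du] assms by auto
  hence "((\<lambda>t. blinfun_apply (Du (x0 + t *\<^sub>R e)) e) has_derivative (\<lambda>h. blinfun_apply (blinfun_apply (D2u x0) (h *\<^sub>R e)) e)) (at 0)"
    by (auto intro!: derivative_eq_intros)
  thus ?thesis
    unfolding has_field_derivative_def
    by (simp add: blinfun.scaleR_right blinfun.scaleR_left mult.commute[of _ "blinfun_apply (blinfun_apply (D2u x0) e) e"])
qed
lemma sol_le:
  fixes \<Omega> :: "(real^'n) set" and a c u v :: "real^'n \<Rightarrow> real" and \<alpha> \<epsilon> :: real
  assumes op: "open \<Omega>" and bd: "bounded \<Omega>"
    and apos: "\<forall>x\<in>closure \<Omega>. a x > 0"
    and ep: "0 < \<epsilon>"
    and su: "is_solution \<alpha> \<Omega> a c \<epsilon> u" and sv: "is_solution \<alpha> \<Omega> a c \<epsilon> v"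
    and x1: "x1 \<in> closure \<Omega>"
  shows "u x1 \<le> v x1"
proof (rule ccontr)
  assume "\<not> u x1 \<le> v x1"
  hence gt: "u x1 > v x1" by simp
  have cl: "closure \<Omega> = \<Omega> \<union> frontier \<Omega>" by (simp add: closure_Un_frontier)
  obtain Du D2u where Cu: "C2_alpha_with \<alpha> \<Omega> u Du D2u"
    and Eu: "\<forall>x\<in>\<Omega>. - lap (D2u x) + c x * inverse (u x + \<epsilon>) * grad_sq (Du x) = a x"
    using su unfolding is_solution_def by blast
  obtain Dv D2v where Cv: "C2_alpha_with \<alpha> \<Omega> v Dv D2v"
    and Ev: "\<forall>x\<in>\<Omega>. - lap (D2v x) + c x * inverse (v x + \<epsilon>) * grad_sq (Dv x) = a x"
    using sv unfolding is_solution_def by blast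
  have du: "\<forall>x\<in>\<Omega>. (u has_derivative blinfun_apply (Du x)) (at x) \<and> (Du has_derivative blinfun_apply (D2u x)) (at x)"
    using Cu unfolding C2_alpha_with_def by blast
  have dv: "\<forall>x\<in>\<Omega>. (v has_derivative blinfun_apply (Dv x)) (at x) \<and> (Dv has_derivative blinfun_apply (D2v x)) (at x)"
    using Cv unfolding C2_alpha_with_def by blast
  have unn: "\<forall>x\<in>closure \<Omega>. u x \<ge> 0" and vnn: "\<forall>x\<in>closure \<Omega>. v x \<ge> 0"
    using su sv cl unfolding is_solution_def by fastforce+
  define g where "g x = (u x + \<epsilon>) / (v x + \<epsilon>)" for x
  have cg: "continuous_on (closure \<Omega>) g"
  proof -
    have "continuous_on (closure \<Omega>) u" "continuous_on (closure \<Omega>) v"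
      using su sv unfolding is_solution_def by auto
    moreover have "\<forall>x\<in>closure \<Omega>. v x + \<epsilon> \<noteq> 0" using vnn ep by force
    ultimately show ?thesis unfolding g_def
      by (intro continuous_on_divide continuous_on_add continuous_on_const) auto
  qed
  have cpt: "compact (closure \<Omega>)" using bd by (simp add: compact_closure)
  obtain x0 where x0: "x0 \<in> closure \<Omega>" and mx: "\<forall>y\<in>closure \<Omega>. g y \<le> g x0"
  proof -
    have ne: "closure \<Omega> \<noteq> {}" using x1 by auto
    show ?thesis using continuous_attains_sup[OF cpt ne cg] that by blast
  qed
  define M where "M = g x0"
  have "v x1 \<ge> 0" using vnn x1 by blast
  hence "g x1 > 1" using gt ep unfolding g_def by (simp add: field_simps)
  hence M1: "M > 1" using mx x1 M_def by force
  have "x0 \<notin> frontier \<Omega>"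
  proof
    assume "x0 \<in> frontier \<Omega>"
    hence "u x0 = 0" "v x0 = 0" using su sv unfolding is_solution_def by auto
    hence "M = 1" using ep by (simp add: M_def g_def)
    thus False using M1 by simp
  qed
  hence xO: "x0 \<in> \<Omega>" using x0 cl by blast
  obtain r where r: "r > 0" "ball x0 r \<subseteq> \<Omega>" using op xO open_contains_ball by blast
  have "v x0 \<ge> 0" using vnn x0 by blast
  hence pq: "u x0 + \<epsilon> = M * (v x0 + \<epsilon>)"
    using ep unfolding M_def g_def by (simp add: field_simps)
  have key: "blinfun_apply (Du x0) e = M * blinfun_apply (Dv x0) e \<and>
      blinfun_apply (blinfun_apply (D2u x0) e) e \<le> M * blinfun_apply (blinfun_apply (D2v x0) e) e"
    if ne: "norm e = 1" for e
  proof -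
    define f where "f t = u (x0 + t *\<^sub>R e) - M * v (x0 + t *\<^sub>R e)" for t
    define f' where "f' t = blinfun_apply (Du (x0 + t *\<^sub>R e)) e - M * blinfun_apply (Dv (x0 + t *\<^sub>R e)) e" for t
    have inb: "x0 + t *\<^sub>R e \<in> \<Omega>" if "\<bar>t\<bar> < r" for t
    proof -
      have "dist x0 (x0 + t *\<^sub>R e) = \<bar>t\<bar>" using ne by (simp add: dist_norm)
      thus ?thesis using r that by auto
    qed
    have A: "\<forall>t. \<bar>t\<bar><r \<longrightarrow> f t \<le> f 0"
    proof (intro allI impI)
      fix t assume "\<bar>t\<bar> < r"
      hence y: "x0 + t *\<^sub>R e \<in> closure \<Omega>" using inb closure_subset by blast
      hence "g (x0 + t *\<^sub>R e) \<le> M" using mx M_def by auto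
      moreover have "v (x0 + t *\<^sub>R e) \<ge> 0" using vnn y by blast
      ultimately have "u (x0 + t *\<^sub>R e) + \<epsilon> \<le> M * (v (x0 + t *\<^sub>R e) + \<epsilon>)"
        using ep unfolding g_def by (simp add: field_simps)
      thus "f t \<le> f 0" using pq unfolding f_def by (simp add: algebra_simps)
    qed
    have B: "\<forall>t. \<bar>t\<bar><r \<longrightarrow> (f has_real_derivative f' t) (at t)"
    proof (intro allI impI)
      fix t assume "\<bar>t\<bar> < r"
      hence y: "x0 + t *\<^sub>R e \<in> \<Omega>" using inb by blast
      show "(f has_real_derivative f' t) (at t)"
        unfolding f_def f'_def
        by (intro DERIV_diff DERIV_cmult line_d1[OF _ refl]) (use du dv y in auto)
    qed
    have C: "(f' has_real_derivative (blinfun_apply (blinfun_apply (D2u x0) e) e - M * blinfun_apply (blinfun_apply (D2v x0) e) e)) (at 0)"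
      unfolding f'_def
      by (intro DERIV_diff DERIV_cmult line_d2) (use du dv xO in auto)
    from second_deriv_max[OF r(1) A B C] show ?thesis by (simp add: f'_def)
  qed
  have ax: "norm (axis i (1::real) :: real^'n) = 1" for i by simp
  have G: "grad_sq (Du x0) = M\<^sup>2 * grad_sq (Dv x0)"
    unfolding grad_sq_def using key[OF ax]
    by (simp add: sum_distrib_left power_mult_distrib)
  have L: "lap (D2u x0) \<le> M * lap (D2v x0)"
    unfolding lap_def using key[OF ax]
    by (simp add: sum_distrib_left sum_mono)
  have q: "v x0 + \<epsilon> > 0" using vnn x0 ep by force
  have eu: "- lap (D2u x0) + c x0 * inverse (M * (v x0 + \<epsilon>)) * (M\<^sup>2 * grad_sq (Dv x0)) = a x0"
    using Eu xO pq G by auto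
  have eu2: "lap (D2u x0) = M * (c x0 * inverse (v x0 + \<epsilon>) * grad_sq (Dv x0)) - a x0"
  proof -
    have "c x0 * inverse (M * (v x0 + \<epsilon>)) * (M\<^sup>2 * grad_sq (Dv x0))
        = M * (c x0 * inverse (v x0 + \<epsilon>) * grad_sq (Dv x0))"
      using M1 q by (simp add: power2_eq_square inverse_mult_distrib)
    thus ?thesis using eu by linarith
  qed
  have ev2: "lap (D2v x0) = c x0 * inverse (v x0 + \<epsilon>) * grad_sq (Dv x0) - a x0"
    using Ev xO by auto
  have "- a x0 \<le> - M * a x0" using L eu2 ev2 by (simp add: algebra_simps)
  moreover have a0: "a x0 > 0" using apos x0 by blast
  moreover have "1 * a x0 < M * a x0" using mult_strict_right_mono[OF M1 a0] .
  ultimately show False by linarith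
qed
theorem mainTheorem4:
  fixes \<Omega> :: "(real^'n) set" and a c u v :: "real^'n \<Rightarrow> real" and \<alpha> \<epsilon> :: real
  assumes "open \<Omega>" and "connected \<Omega>" and "bounded \<Omega>"
    and "0 < \<alpha>" and "\<alpha> < 1"
    and "C2_alpha_boundary \<alpha> \<Omega>"
    and "C0_alpha \<alpha> (closure \<Omega>) a" and "C0_alpha \<alpha> (closure \<Omega>) c"
    and "\<forall>x\<in>closure \<Omega>. a x > 0" and "\<forall>x\<in>closure \<Omega>. c x > 0"
    and "0 < \<epsilon>" and "\<epsilon> < 1"
    and "is_solution \<alpha> \<Omega> a c \<epsilon> u" and "is_solution \<alpha> \<Omega> a c \<epsilon> v"
  shows "\<forall>x\<in>closure \<Omega>. u x = v x"
proof
  fix x assume x: "x \<in> closure \<Omega>"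
  show "u x = v x"
    using sol_le[OF assms(1,3,9,11,13,14) x] sol_le[OF assms(1,3,9,11,14,13) x] by simp
qed

end
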